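(* Fix integers $N\ge 2$ and $K\ge 1$. There exists a Boolean tensor $\mathcal{B}\in\{0,1\}^{N\times N\times K}$ such that no ranking tensor in $\pi(\mathcal{M}^{\text{TransE}})$ is consistent with $\mathcal{B}$.
   Context: A score-based model assigns a score $s_k(i,j)\in\mathbb{R}$ to each triple, $i,j\in\{1,\dots,N\}$, $k\in\{1,\dots,K\}$; its scoring tensor has frontal slices $\mathbf{S}_k$ with $[\mathbf{S}_k]_{ij}=s_k(i,j)$. For a real $N\times N$ matrix $\mathbf{S}$, $\pi(\mathbf{S})$ is the matrix of dense ranks: $\pi_{ij}(\mathbf{S})=1+$ (number of distinct values among entries of $\mathbf{S}$ strictly larger than $s_{ij}$). For tensors, $\pi$ acts slicewise; for a set $X$, $\pi(X)=\{\pi(x):x\in X\}$. TransE of size $r$: parameters $\mathbf{A}\in\mathbb{R}^{N\times r}$ (rows $\mathbf{a}_i$), $\mathbf{R}\in\mathbb{R}^{K\times r}$ (rows $\mathbf{r}_k$), score $-\|\mathbf{a}_i+\mathbf{r}_k-\mathbf{a}_j\|_2^2$; $\mathcal{M}^{\text{TransE}}$ is the set of scoring tensors of all TransE models of all sizes $r\in\mathbb{N}^+$. A ranking tensor $\mathcal{P}$ is consistent with a Boolean tensor $\mathcal{B}$ if for every $k$ and all $i,j,i',j'$: $b_{ijk}=1$ and $b_{i'j'k}=0$ imply $p_{ijk}<p_{i'j'k}$. *)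

theory Defs
  imports Complex_Main
begin

(* Indices i,j range over {1..N}, k over {1..K}. A tensor is a function
   nat => nat => nat => _ ; only values at valid indices matter. *)

definition dense_rank :: "nat \<Rightarrow> (nat \<Rightarrow> nat \<Rightarrow> real) \<Rightarrow> nat \<Rightarrow> nat \<Rightarrow> nat" where
  "dense_rank N S i j = 1 + card {v. \<exists>i'\<in>{1..N}. \<exists>j'\<in>{1..N}. v = S i' j' \<and> v > S i j}"

definition rank_tensor :: "nat \<Rightarrow> (nat \<Rightarrow> nat \<Rightarrow> nat \<Rightarrow> real) \<Rightarrow> (nat \<Rightarrow> nat \<Rightarrow> nat \<Rightarrow> nat)" where
  "rank_tensor N S = (\<lambda>i j k. dense_rank N (\<lambda>i' j'. S i' j' k) i j)"

(* TransE of size r: A i l = (a_i)_l, R k l = (r_k)_l for l < r *)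
definition transE_score :: "nat \<Rightarrow> (nat \<Rightarrow> nat \<Rightarrow> real) \<Rightarrow> (nat \<Rightarrow> nat \<Rightarrow> real) \<Rightarrow> (nat \<Rightarrow> nat \<Rightarrow> nat \<Rightarrow> real)" where
  "transE_score r A R = (\<lambda>i j k. - (\<Sum>l<r. (A i l + R k l - A j l)\<^sup>2))"

definition M_TransE :: "(nat \<Rightarrow> nat \<Rightarrow> nat \<Rightarrow> real) set" where
  "M_TransE = {transE_score r A R | r A R. r \<ge> 1}"

definition consistent :: "nat \<Rightarrow> nat \<Rightarrow> (nat \<Rightarrow> nat \<Rightarrow> nat \<Rightarrow> nat) \<Rightarrow> (nat \<Rightarrow> nat \<Rightarrow> nat \<Rightarrow> bool) \<Rightarrow> bool" where
  "consistent N K P B \<longleftrightarrow>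
     (\<forall>k\<in>{1..K}. \<forall>i\<in>{1..N}. \<forall>j\<in>{1..N}. \<forall>i'\<in>{1..N}. \<forall>j'\<in>{1..N}.
        B i j k \<and> \<not> B i' j' k \<longrightarrow> P i j k < P i' j' k)"

end

theory Submission
  imports Defs
begin

lemma rank_mono:
  assumes "S a b \<le> S c d"
  shows "dense_rank N S c d \<le> dense_rank N S a b"
proof -
  let ?X = "\<lambda>x y. {v. \<exists>i'\<in>{1..N}. \<exists>j'\<in>{1..N}. v = S i' j' \<and> v > S x y}"
  have fin: "finite (?X a b)"
    by (rule finite_subset[of _ "(\<lambda>(i,j). S i j) ` ({1..N} \<times> {1..N})"]) auto
  have "?X c d \<subseteq> ?X a b" using assms by auto
  then have "card (?X c d) \<le> card (?X a b)" using fin by (rule card_mono[rotated])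
  then show ?thesis unfolding dense_rank_def by simp
qed

theorem theorem10:
  fixes N K :: nat
  assumes "N \<ge> 2" and "K \<ge> 1"
  shows "\<exists>B :: nat \<Rightarrow> nat \<Rightarrow> nat \<Rightarrow> bool.
           \<not> (\<exists>P \<in> rank_tensor N ` M_TransE. consistent N K P B)"
proof
  let ?B = "\<lambda>i j k::nat. (i = 1 \<and> j = (2::nat)) \<or> (i = 2 \<and> j = 1)"
  show "\<not> (\<exists>P \<in> rank_tensor N ` M_TransE. consistent N K P ?B)"
  proof
    assume "\<exists>P \<in> rank_tensor N ` M_TransE. consistent N K P ?B"
    then obtain r A R where P: "consistent N K (rank_tensor N (transE_score r A R)) ?B"
      unfolding M_TransE_def by auto
    define S where "S = (\<lambda>i j. transE_score r A R i j 1)"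
    have in1: "(1::nat) \<in> {1..K}" "(1::nat) \<in> {1..N}" "(2::nat) \<in> {1..N}" using assms by auto
    have r1: "rank_tensor N (transE_score r A R) 1 2 1 < rank_tensor N (transE_score r A R) 1 1 1"
    proof -
      have "\<forall>k\<in>{1..K}. \<forall>i\<in>{1..N}. \<forall>j\<in>{1..N}. \<forall>i'\<in>{1..N}. \<forall>j'\<in>{1..N}.
        ?B i j k \<and> \<not> ?B i' j' k \<longrightarrow> rank_tensor N (transE_score r A R) i j k < rank_tensor N (transE_score r A R) i' j' k"
        using P unfolding consistent_def by blast
      then show ?thesis using in1 by simp
    qed
    have r2: "rank_tensor N (transE_score r A R) 2 1 1 < rank_tensor N (transE_score r A R) 2 2 1"
    proof -
      have "\<forall>k\<in>{1..K}. \<forall>i\<in>{1..N}. \<forall>j\<in>{1..N}. \<forall>i'\<in>{1..N}. \<forall>j'\<in>{1..N}.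
        ?B i j k \<and> \<not> ?B i' j' k \<longrightarrow> rank_tensor N (transE_score r A R) i j k < rank_tensor N (transE_score r A R) i' j' k"
        using P unfolding consistent_def by blast
      then show ?thesis using in1 by simp
    qed
    have s1: "S 1 2 > S 1 1"
    proof (rule ccontr)
      assume "\<not> S 1 2 > S 1 1"
      then have "S 1 2 \<le> S 1 1" by simp
      from rank_mono[of S 1 2 1 1 N, OF this] r1 show False
        unfolding rank_tensor_def S_def by simp
    qed
    have s2: "S 2 1 > S 2 2"
    proof (rule ccontr)
      assume "\<not> S 2 1 > S 2 2"
      then have "S 2 1 \<le> S 2 2" by simp
      from rank_mono[of S 2 1 2 2 N, OF this] r2 show False
        unfolding rank_tensor_def S_def by simp
    qed
    have "(\<Sum>l<r. (A 1 l + R 1 l - A 2 l)\<^sup>2) + (\<Sum>l<r. (A 2 l + R 1 l - A 1 l)\<^sup>2)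
          \<ge> (\<Sum>l<r. (A 1 l + R 1 l - A 1 l)\<^sup>2) + (\<Sum>l<r. (A 2 l + R 1 l - A 2 l)\<^sup>2)"
      unfolding sum.distrib[symmetric]
    proof (rule sum_mono)
      fix l
      have "0 \<le> 2 * (A 1 l - A 2 l)\<^sup>2" by simp
      then show "(A 1 l + R 1 l - A 1 l)\<^sup>2 + (A 2 l + R 1 l - A 2 l)\<^sup>2
          \<le> (A 1 l + R 1 l - A 2 l)\<^sup>2 + (A 2 l + R 1 l - A 1 l)\<^sup>2"
        by (simp add: power2_eq_square algebra_simps)
    qed
    with s1 s2 show False unfolding S_def transE_score_def by simp
  qed
qed

end
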